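(* Let $n$ be an odd perfect square divisible by $p^4$ for some prime $p\ge7$. Then $C_{S(n)^*}=5$.
   Context: For a natural number $n$, $\mathbb Z_n=\mathbb Z/n\mathbb Z$, $S(n)=\{x^2:x\in\mathbb Z_n\}$, $S(n)^*=S(n)\setminus\{0\}$. For $A\subseteq\mathbb Z_n$, a sequence $(y_1,\dots,y_t)$ ($t\ge1$) in $\mathbb Z_n$ is an $A$-weighted zero-sum sequence if there exist $a_1,\dots,a_t\in A$ with $\sum a_iy_i=0$. $C_A(n)$ is the least positive integer $t$ such that every sequence of length $t$ in $\mathbb Z_n$ has a nonempty subsequence of consecutive terms that is an $A$-weighted zero-sum sequence; $C_{S(n)^*}=C_{S(n)^*}(n)$. *)

theory Defs
  imports Main "HOL-Computational_Algebra.Primes"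
begin

text \<open>Z_n is modelled by the integer residues {0..<n}; arithmetic is taken mod n.\<close>

definition Zn :: "nat \<Rightarrow> int set" where
  "Zn n = {0..<int n}"

definition Sq :: "nat \<Rightarrow> int set" where
  "Sq n = {(x^2) mod int n | x. x \<in> Zn n}"

definition Sq_star :: "nat \<Rightarrow> int set" where
  "Sq_star n = Sq n - {0}"

definition weighted_zero_sum :: "nat \<Rightarrow> int set \<Rightarrow> int list \<Rightarrow> bool" where
  "weighted_zero_sum n A ys \<longleftrightarrow> ys \<noteq> [] \<and>
     (\<exists>as. length as = length ys \<and> set as \<subseteq> A \<and>
           (\<Sum>i<length ys. as ! i * ys ! i) mod int n = 0)"

definition has_consec_wzs :: "nat \<Rightarrow> int set \<Rightarrow> int list \<Rightarrow> bool" where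
  "has_consec_wzs n A ys \<longleftrightarrow>
     (\<exists>i j. i < j \<and> j \<le> length ys \<and> weighted_zero_sum n A (take (j - i) (drop i ys)))"

definition C_A :: "int set \<Rightarrow> nat \<Rightarrow> nat" where
  "C_A A n = (LEAST t. t > 0 \<and>
     (\<forall>ys. length ys = t \<and> set ys \<subseteq> Zn n \<longrightarrow> has_consec_wzs n A ys))"

end

theory Submission
  imports Defs "HOL-Number_Theory.Number_Theory"
begin


lemma nonres_exists:
  assumes p: "prime (p::nat)" "p > 2"
  shows "\<exists>v::int. \<not> QuadRes (int p) v"
proof (rule ccontr)
  assume H: "\<not> (\<exists>v::int. \<not> QuadRes (int p) v)"
  define A where "A = {1..int p - 1}"
  define f where "f = (\<lambda>x::int. x^2 mod int p)"
  have pp: "prime (int p)" using p by simp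
  have sub: "f ` A \<subseteq> A"
  proof
    fix y assume "y \<in> f ` A"
    then obtain x where x: "x \<in> A" "y = f x" by auto
    have x1: "1 \<le> x" "x < int p" using x(1) unfolding A_def by auto
    have "\<not> int p dvd x"
    proof
      assume "int p dvd x"
      then have "int p \<le> x" using x1 zdvd_imp_le by simp
      with x1 show False by simp
    qed
    hence "\<not> int p dvd x^2" using pp prime_dvd_power by blast
    hence h1: "x^2 mod int p \<noteq> 0" by auto
    have h2: "x^2 mod int p < int p" "x^2 mod int p \<ge> 0" using p by auto
    have "1 \<le> x^2 mod int p" "x^2 mod int p \<le> int p - 1" using h1 h2 by linarith+
    then show "y \<in> A" using x unfolding A_def f_def by auto
  qed
  have surj: "f ` A = A"
  proof
    show "A \<subseteq> f ` A"
    proof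
      fix k assume k: "k \<in> A"
      from H have "QuadRes (int p) k" by blast
      then obtain y where y: "[y^2 = k] (mod int p)" unfolding QuadRes_def by blast
      define z where "z = y mod int p"
      have "[z^2 = k] (mod int p)" using y unfolding z_def
        by (metis cong_def power_mod)
      hence fz: "f z = k" using k unfolding f_def A_def cong_def by auto
      have "z \<noteq> 0" using fz k unfolding f_def A_def by auto
      moreover have "z \<ge> 0" "z < int p" using p unfolding z_def by auto
      ultimately have "z \<in> A" unfolding A_def by auto
      thus "k \<in> f ` A" using fz by blast
    qed
  qed (rule sub)
  have "inj_on f A"
    by (rule eq_card_imp_inj_on) (simp add: A_def, simp add: surj)
  moreover have "1 \<in> A" "int p - 1 \<in> A" "(1::int) \<noteq> int p - 1" using p unfolding A_def by auto
  moreover have "f 1 = f (int p - 1)"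
  proof -
    have "(int p - 1)^2 = int p * (int p - 2) + 1" by (simp add: power2_eq_square algebra_simps)
    hence "(int p - 1)^2 mod int p = 1 mod int p" by simp
    thus ?thesis unfolding f_def by simp
  qed
  ultimately show False by (meson inj_on_contraD)
qed

lemma QuadRes_cong:
  assumes "[a = b] (mod m)" "QuadRes m a" shows "QuadRes m b"
  using assms unfolding QuadRes_def using cong_trans by blast

lemma nonres_not0:
  assumes "\<not> QuadRes m a" shows "\<not> m dvd a"
proof
  assume "m dvd a"
  hence "[0^2 = a] (mod m)" by (simp add: cong_def dvd_eq_mod_eq_0)
  thus False using assms unfolding QuadRes_def by blast
qed

lemma nonres_mult:
  assumes p: "prime (p::nat)" "p > 2" and a: "\<not> QuadRes (int p) a" and b: "\<not> QuadRes (int p) b"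
  shows "QuadRes (int p) (a*b)"
proof -
  have pp: "prime (int p)" using p by simp
  have na: "\<not> [a = 0] (mod int p)" using nonres_not0[OF a] by (simp add: cong_0_iff)
  have nb: "\<not> [b = 0] (mod int p)" using nonres_not0[OF b] by (simp add: cong_0_iff)
  have La: "Legendre a (int p) = -1" using a na unfolding Legendre_def by simp
  have Lb: "Legendre b (int p) = -1" using b nb unfolding Legendre_def by simp
  have ea: "[-1 = a ^ ((p - 1) div 2)] (mod int p)" using euler_criterion[OF p, of a] La by simp
  have eb: "[-1 = b ^ ((p - 1) div 2)] (mod int p)" using euler_criterion[OF p, of b] Lb by simp
  have "[(-1)*(-1) = a ^ ((p - 1) div 2) * b ^ ((p - 1) div 2)] (mod int p)"
    by (rule cong_mult[OF ea eb])
  hence e1: "[1 = (a*b) ^ ((p - 1) div 2)] (mod int p)" by (simp add: power_mult_distrib)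
  have eab: "[Legendre (a*b) (int p) = (a*b) ^ ((p - 1) div 2)] (mod int p)"
    using euler_criterion[OF p, of "a*b"] by simp
  have L1: "[Legendre (a*b) (int p) = 1] (mod int p)" using eab e1 using cong_sym cong_trans by blast
  have nab: "\<not> [a*b = 0] (mod int p)"
    using na nb pp by (simp add: cong_0_iff prime_dvd_mult_iff)
  show ?thesis
  proof (rule ccontr)
    assume "\<not> QuadRes (int p) (a*b)"
    hence "Legendre (a*b) (int p) = -1" using nab unfolding Legendre_def by simp
    with L1 have "[-1 = 1] (mod int p)" by simp
    hence "int p dvd 2" by (simp add: cong_iff_dvd_diff)
    hence "int p \<le> 2" by (rule zdvd_imp_le) simp
    with p show False by simp
  qed
qed

lemma nonres_sum_exists:
  assumes p: "prime (p::nat)" "p > 2"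
  shows "\<exists>a b::int. \<not> int p dvd a \<and> \<not> int p dvd b \<and> \<not> QuadRes (int p) (a^2+b^2)"
proof (rule ccontr)
  assume H: "\<not> ?thesis"
  have pp: "prime (int p)" using p by simp
  have all: "1 \<le> k \<longrightarrow> k < p \<longrightarrow> QuadRes (int p) (int k)" for k
  proof (induction k)
    case 0
    show ?case by simp
  next
    case (Suc k)
    show ?case
    proof (intro impI)
      assume k1: "1 \<le> Suc k" and k2: "Suc k < p"
      show "QuadRes (int p) (int (Suc k))"
      proof (cases "k = 0")
        case True
        then show ?thesis unfolding QuadRes_def by (intro exI[of _ 1]) simp
      next
        case False
        then have "QuadRes (int p) (int k)" using Suc.IH k2 by simp
        then obtain y where y: "[y^2 = int k] (mod int p)" unfolding QuadRes_def by auto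
        have "\<not> int p dvd int k"
        proof
          assume "int p dvd int k"
          then have "p dvd k" by simp
          then have "p \<le> k" using False by (simp add: dvd_imp_le)
          then show False using k2 by simp
        qed
        hence "\<not> int p dvd y^2" using y cong_dvd_iff by blast
        hence "\<not> int p dvd y" by (metis dvd_mult2 power2_eq_square)
        moreover have "\<not> int p dvd 1" using pp by (simp add: prime_int_iff)
        ultimately have "QuadRes (int p) (y^2 + 1^2)" using H by blast
        moreover have "[y^2 + 1^2 = int (Suc k)] (mod int p)" using cong_add[OF y cong_refl[of "1::int"]] by (simp add: add.commute)
        ultimately show ?thesis using QuadRes_cong by blast
      qed
    qed
  qed
  obtain v where v: "\<not> QuadRes (int p) v" using nonres_exists[OF p] by blast
  have "\<not> int p dvd v" using nonres_not0[OF v] .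
  hence "v mod int p \<noteq> 0" by auto
  moreover have "v mod int p \<ge> 0" "v mod int p < int p" using p by auto
  ultimately have "v mod int p = int (nat (v mod int p))" "1 \<le> nat (v mod int p)" "nat (v mod int p) < p"
    by auto
  then obtain k where k: "v mod int p = int k" "1 \<le> k" "k < p" by blast
  have "QuadRes (int p) (v mod int p)" using all[of k] k by simp
  moreover have "[v mod int p = v] (mod int p)" by simp
  ultimately show False using v QuadRes_cong by blast
qed




lemma dvd_eqI: "m dvd (a::int) \<Longrightarrow> b = a \<Longrightarrow> m dvd b" by simp
lemma dvd_negI: "m dvd (a::int) \<Longrightarrow> b = -a \<Longrightarrow> m dvd b" by simp

lemma unit_mult: "prime (P::int) \<Longrightarrow> \<not> P dvd a \<Longrightarrow> \<not> P dvd b \<Longrightarrow> \<not> P dvd a*b"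
  by (simp add: prime_dvd_mult_iff)

lemma unit_sq: "prime (P::int) \<Longrightarrow> \<not> P dvd a \<Longrightarrow> \<not> P dvd a^2"
  by (simp add: prime_dvd_power_iff)

lemma unit_of_cong_sq:
  assumes "[u^2 = c] (mod (P::int))" "\<not> P dvd c" shows "\<not> P dvd u"
proof
  assume "P dvd u"
  hence "P dvd u^2" by (simp add: power2_eq_square)
  hence "P dvd c" using cong_dvd_iff[OF assms(1)] by simp
  with assms(2) show False by simp
qed

lemma small_not_dvd:
  assumes "p \<ge> 7" "0 < k" "k < 7" shows "\<not> int p dvd k"
proof
  assume "int p dvd k"
  hence "int p \<le> k" using assms(2) zdvd_imp_le by blast
  with assms show False by simp
qed

lemma two_sq:
  assumes p: "prime (p::nat)" "p \<ge> 7" and c: "\<not> int p dvd c"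
  shows "\<exists>l X Y. \<not> int p dvd l \<and> \<not> int p dvd X \<and> \<not> int p dvd Y \<and> [l^2 * c = X^2 + Y^2] (mod int p)"
proof -
  have pp: "prime (int p)" using p by simp
  have p2: "p > 2" using p by simp
  show ?thesis
  proof (cases "QuadRes (int p) c")
    case True
    then obtain t where t: "[t^2 = c] (mod int p)" unfolding QuadRes_def by blast
    have tu: "\<not> int p dvd t" using unit_of_cong_sq[OF t c] .
    have "[25 * t^2 = 25 * c] (mod int p)" using cong_mult[OF cong_refl t] .
    hence "int p dvd 25 * t^2 - 25 * c" by (simp add: cong_iff_dvd_diff)
    moreover have "5^2 * c - ((3*t)^2 + (4*t)^2) = -(25 * t^2 - 25 * c)"
      by (simp add: power2_eq_square algebra_simps)
    ultimately have "int p dvd 5^2 * c - ((3*t)^2 + (4*t)^2)" by (rule dvd_negI)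
    hence "[5^2 * c = (3*t)^2 + (4*t)^2] (mod int p)" by (simp add: cong_iff_dvd_diff)
    moreover have "\<not> int p dvd 5" "\<not> int p dvd 3" "\<not> int p dvd 4"
      using small_not_dvd[OF p(2)] by auto
    ultimately show ?thesis using unit_mult[OF pp] tu
      by (intro exI[of _ 5] exI[of _ "3*t"] exI[of _ "4*t"]) auto
  next
    case False
    obtain a b where ab: "\<not> int p dvd a" "\<not> int p dvd b" "\<not> QuadRes (int p) (a^2+b^2)"
      using nonres_sum_exists[OF p(1) p2] by blast
    define n0 where "n0 = a^2+b^2"
    have "QuadRes (int p) (c*n0)" using nonres_mult[OF p(1) p2 False] ab(3) n0_def by simp
    then obtain u where u: "[u^2 = c*n0] (mod int p)" unfolding QuadRes_def by blast
    have n0u: "\<not> int p dvd n0" using nonres_not0 ab(3) n0_def by simp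
    have uu: "\<not> int p dvd u" using unit_of_cong_sq[OF u unit_mult[OF pp c n0u]] .
    have "[n0 * u^2 = n0 * (c*n0)] (mod int p)" using cong_mult[OF cong_refl u] .
    hence d: "int p dvd n0 * u^2 - n0 * (c*n0)" by (simp add: cong_iff_dvd_diff)
    have "n0^2 * c - ((a*u)^2 + (b*u)^2) = -(n0 * u^2 - n0 * (c*n0))"
      by (simp add: n0_def power2_eq_square algebra_simps)
    hence "int p dvd n0^2 * c - ((a*u)^2 + (b*u)^2)" by (rule dvd_negI[OF d])
    hence "[n0^2 * c = (a*u)^2 + (b*u)^2] (mod int p)" by (simp add: cong_iff_dvd_diff)
    thus ?thesis using n0u unit_mult[OF pp] ab uu
      by (intro exI[of _ n0] exI[of _ "a*u"] exI[of _ "b*u"]) auto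
  qed
qed

lemma three_aux:
  assumes p: "prime (p::nat)" "p \<ge> 7"
    and w: "\<not> int p dvd w1" "\<not> int p dvd w2" "\<not> int p dvd w3"
    and q: "QuadRes (int p) (w1*w2)"
  shows "\<exists>x y z. \<not> int p dvd x \<and> \<not> int p dvd y \<and> \<not> int p dvd z \<and>
      [w1*x^2 + w2*y^2 + w3*z^2 = 0] (mod int p)"
proof -
  have pp: "prime (int p)" using p by simp
  obtain r where r: "[r^2 = w1*w2] (mod int p)" using q unfolding QuadRes_def by blast
  have ru: "\<not> int p dvd r" using unit_of_cong_sq[OF r unit_mult[OF pp w(1,2)]] .
  define c where "c = -(w1*w3)"
  have cu: "\<not> int p dvd c" using unit_mult[OF pp w(1,3)] unfolding c_def by simp
  obtain l X Y where lXY: "\<not> int p dvd l" "\<not> int p dvd X" "\<not> int p dvd Y"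
      "[l^2 * c = X^2 + Y^2] (mod int p)"
    using two_sq[OF p cu] by blast
  define K where "K = w1*X^2 + w3*l^2*w1^2"
  have E: "w1*(X*r)^2 + w2*(Y*w1)^2 + w3*(l*r*w1)^2
      = (r^2 - w1*w2)*K - w1^2*w2*(l^2*c - (X^2+Y^2))"
    by (simp add: c_def K_def power2_eq_square algebra_simps)
  have d1: "int p dvd (r^2 - w1*w2)" using r by (simp add: cong_iff_dvd_diff)
  have d2: "int p dvd (l^2*c - (X^2+Y^2))" using lXY(4) by (simp add: cong_iff_dvd_diff)
  have "int p dvd (w1*(X*r)^2 + w2*(Y*w1)^2 + w3*(l*r*w1)^2)"
  proof -
    have a1: "int p dvd (r^2 - w1*w2)*K" using d1 by (rule dvd_mult2)
    have a2: "int p dvd w1^2*w2*(l^2*c - (X^2+Y^2))" using d2 by (rule dvd_mult)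
    show ?thesis unfolding E by (rule dvd_diff[OF a1 a2])
  qed
  hence "[w1*(X*r)^2 + w2*(Y*w1)^2 + w3*(l*r*w1)^2 = 0] (mod int p)"
    by (simp add: cong_0_iff)
  moreover have "\<not> int p dvd X*r" "\<not> int p dvd Y*w1" "\<not> int p dvd l*r*w1"
    using unit_mult[OF pp] lXY ru w by auto
  ultimately show ?thesis by (intro exI[of _ "X*r"] exI[of _ "Y*w1"] exI[of _ "l*r*w1"]) auto
qed

lemma QR_prod_same:
  assumes p: "prime (p::nat)" "p > 2" and "QuadRes (int p) a = QuadRes (int p) b"
  shows "QuadRes (int p) (a*b)"
proof (cases "QuadRes (int p) a")
  case True
  then have "QuadRes (int p) b" using assms by simp
  then obtain y2 where y2: "[y2^2 = b] (mod int p)" unfolding QuadRes_def by blast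
  obtain y1 where y1: "[y1^2 = a] (mod int p)" using True unfolding QuadRes_def by blast
  have "[(y1*y2)^2 = a*b] (mod int p)" using cong_mult[OF y1 y2] by (simp add: power_mult_distrib)
  then show ?thesis unfolding QuadRes_def by blast
next
  case False
  then show ?thesis using nonres_mult[OF p] assms by simp
qed

lemma three:
  assumes p: "prime (p::nat)" "p \<ge> 7"
    and w: "\<not> int p dvd w1" "\<not> int p dvd w2" "\<not> int p dvd w3"
  shows "\<exists>x y z. \<not> int p dvd x \<and> \<not> int p dvd y \<and> \<not> int p dvd z \<and>
      [w1*x^2 + w2*y^2 + w3*z^2 = 0] (mod int p)"
proof -
  have p2: "p > 2" using p by simp
  consider "QuadRes (int p) w1 = QuadRes (int p) w2" | "QuadRes (int p) w1 = QuadRes (int p) w3"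
    | "QuadRes (int p) w2 = QuadRes (int p) w3" by blast
  then show ?thesis
  proof cases
    case 1
    show ?thesis using three_aux[OF p w QR_prod_same[OF p(1) p2 1]] .
  next
    case 2
    obtain x z y where "\<not> int p dvd x" "\<not> int p dvd z" "\<not> int p dvd y"
      "[w1*x^2 + w3*z^2 + w2*y^2 = 0] (mod int p)"
      using three_aux[OF p w(1) w(3) w(2) QR_prod_same[OF p(1) p2 2]] by blast
    then show ?thesis by (intro exI[of _ x] exI[of _ y] exI[of _ z]) (simp add: ac_simps)
  next
    case 3
    obtain y z x where "\<not> int p dvd y" "\<not> int p dvd z" "\<not> int p dvd x"
      "[w2*y^2 + w3*z^2 + w1*x^2 = 0] (mod int p)"
      using three_aux[OF p w(2) w(3) w(1) QR_prod_same[OF p(1) p2 3]] by blast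
    then show ?thesis by (intro exI[of _ x] exI[of _ y] exI[of _ z]) (simp add: ac_simps)
  qed
qed

lemma hensel:
  assumes p: "prime (p::nat)" "p > 2"
    and w: "\<not> int p dvd w" and z: "\<not> int p dvd z" and c: "[w*z^2 = c] (mod int p)"
    and k: "k \<ge> 1"
  shows "\<exists>z'. [z' = z] (mod int p) \<and> [w*z'^2 = c] (mod int p ^ k)"
  using k
proof (induction k rule: dec_induct)
  case base
  show ?case using c by (intro exI[of _ z]) simp
next
  case (step k)
  then obtain z' where z': "[z' = z] (mod int p)" "[w*z'^2 = c] (mod int p ^ k)" by blast
  have pp: "prime (int p)" using p by simp
  have z'u: "\<not> int p dvd z'" using z cong_dvd_iff[OF z'(1)] by simp
  have two: "\<not> int p dvd 2"
  proof
    assume "int p dvd 2"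
    hence "int p \<le> 2" by (rule zdvd_imp_le) simp
    with p show False by simp
  qed
  have "\<not> int p dvd 2*w*z'" using unit_mult[OF pp] two w z'u by auto
  hence "coprime (int p) (2*w*z')" by (rule prime_imp_coprime[OF pp])
  hence "coprime (2*w*z') (int p)" by (simp add: coprime_commute)
  then obtain i where i: "[2*w*z' * i = 1] (mod int p)" using cong_solve_coprime_int by blast
  obtain s where s: "c - w*z'^2 = int p ^ k * s" using z'(2)
    by (metis cong_iff_dvd_diff cong_sym dvdE)
  define t where "t = s*i"
  define z2 where "z2 = z' + t * int p ^ k"
  have d: "int p dvd (s - 2*w*z'*t)"
  proof -
    have "[s * (2*w*z' * i) = s * 1] (mod int p)" using cong_mult[OF cong_refl i] .
    hence "[2*w*z'*t = s] (mod int p)" by (simp add: t_def algebra_simps)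
    hence "int p dvd 2*w*z'*t - s" by (simp add: cong_iff_dvd_diff)
    hence "int p dvd -(2*w*z'*t - s)" by (simp only: dvd_minus_iff)
    thus ?thesis by simp
  qed
  have pk: "(int p ^ k)^2 = int p ^ (2*k)" by (metis power_mult mult.commute)
  have eq0: "c - w*z2^2 = int p ^ k * (s - 2*w*z'*t) - w*t^2 * (int p ^ k)^2"
    unfolding z2_def using s by (simp add: power2_eq_square algebra_simps)
  have eq: "c - w*z2^2 = int p ^ k * (s - 2*w*z'*t) - w*t^2 * int p ^ (2*k)"
    using eq0 pk by simp
  have "int p ^ Suc k dvd int p ^ k * (s - 2*w*z'*t)"
    using d by (simp add: mult_dvd_mono)
  moreover have "int p ^ Suc k dvd w*t^2 * int p ^ (2*k)"
  proof -
    have "int p ^ Suc k dvd int p ^ (2*k)" by (rule le_imp_power_dvd) (use step(1) in simp)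
    thus ?thesis by (rule dvd_mult)
  qed
  ultimately have "int p ^ Suc k dvd c - w*z2^2" unfolding eq by (rule dvd_diff)
  hence "int p ^ Suc k dvd -(c - w*z2^2)" by (simp only: dvd_minus_iff)
  hence "[w*z2^2 = c] (mod int p ^ Suc k)" by (simp add: cong_iff_dvd_diff)
  moreover have "[z2 = z] (mod int p)"
  proof -
    have "int p dvd t * int p ^ k" using step(1) by (simp add: dvd_power)
    hence "[z2 = z'] (mod int p)" unfolding z2_def by (simp add: cong_iff_dvd_diff)
    thus ?thesis using z'(1) cong_trans by blast
  qed
  ultimately show ?case by blast
qed

lemma U3:
  assumes p: "prime (p::nat)" "p \<ge> 7"
    and w: "\<not> int p dvd w1" "\<not> int p dvd w2" "\<not> int p dvd w3"
    and T: "int p dvd T"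
  shows "\<exists>x y z. \<not> int p dvd x \<and> \<not> int p dvd y \<and> \<not> int p dvd z \<and>
      [w1*x^2 + w2*y^2 + w3*z^2 = T] (mod int p ^ 4)"
proof -
  obtain x y z where xyz: "\<not> int p dvd x" "\<not> int p dvd y" "\<not> int p dvd z"
      "[w1*x^2 + w2*y^2 + w3*z^2 = 0] (mod int p)" using three[OF p w] by blast
  have "int p dvd (w1*x^2 + w2*y^2 + w3*z^2) - 0" using xyz(4) by (simp only: cong_iff_dvd_diff)
  hence "int p dvd (w1*x^2 + w2*y^2 + w3*z^2) - T" using T by (simp add: dvd_diff)
  moreover have "w3*z^2 - (T - w1*x^2 - w2*y^2) = (w1*x^2 + w2*y^2 + w3*z^2) - T" by simp
  ultimately have "int p dvd w3*z^2 - (T - w1*x^2 - w2*y^2)" by (rule dvd_eqI)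
  hence hc: "[w3*z^2 = T - w1*x^2 - w2*y^2] (mod int p)" by (simp add: cong_iff_dvd_diff)
  obtain z' where z': "[z' = z] (mod int p)" "[w3*z'^2 = T - w1*x^2 - w2*y^2] (mod int p ^ 4)"
    using hensel[OF p(1) _ w(3) xyz(3) hc, of 4] p by auto
  have "\<not> int p dvd z'" using xyz(3) cong_dvd_iff[OF z'(1)] by simp
  moreover have "[w1*x^2 + w2*y^2 + w3*z'^2 = T] (mod int p ^ 4)"
  proof -
    have "int p ^ 4 dvd w3*z'^2 - (T - w1*x^2 - w2*y^2)" using z'(2) by (simp add: cong_iff_dvd_diff)
    moreover have "(w1*x^2 + w2*y^2 + w3*z'^2) - T = w3*z'^2 - (T - w1*x^2 - w2*y^2)" by simp
    ultimately have "int p ^ 4 dvd (w1*x^2 + w2*y^2 + w3*z'^2) - T" by (rule dvd_eqI)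
    thus ?thesis by (simp add: cong_iff_dvd_diff)
  qed
  ultimately show ?thesis using xyz by (intro exI[of _ x] exI[of _ y] exI[of _ z']) auto
qed




lemma D0:
  assumes q: "prime (q::int)" and v: "\<not> QuadRes q v" and d: "q dvd a^2 - v*b^2"
  shows "q dvd b \<and> q dvd a"
proof -
  have qb: "q dvd b"
  proof (rule ccontr)
    assume nb: "\<not> q dvd b"
    hence "coprime q b" by (rule prime_imp_coprime[OF q])
    hence "coprime b q" by (simp add: coprime_commute)
    then obtain i where i: "[b*i = 1] (mod q)" using cong_solve_coprime_int by blast
    have c1: "[a^2 = v*b^2] (mod q)" using d by (simp add: cong_iff_dvd_diff)
    have "[a^2 * i^2 = v*b^2*i^2] (mod q)" using cong_mult[OF c1 cong_refl] .
    moreover have "[v*(b*i)^2 = v*1^2] (mod q)" using cong_mult[OF cong_refl cong_pow[OF i]] .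
    ultimately have "[(a*i)^2 = v] (mod q)"
      by (simp add: power_mult_distrib algebra_simps cong_trans)
    hence "QuadRes q v" unfolding QuadRes_def by blast
    with v show False by simp
  qed
  hence "q dvd v*b^2" by (simp add: power2_eq_square)
  hence "q dvd (a^2 - v*b^2) + v*b^2" using d by (rule dvd_add[rotated])
  hence "q dvd a^2" by simp
  hence "q dvd a" using q prime_dvd_power by blast
  with qb show ?thesis by simp
qed

lemma descent:
  assumes q: "prime (q::int)" and v: "\<not> QuadRes q v" and R1: "q dvd R" and R2: "\<not> q^2 dvd R"
  shows "q^(2*f) dvd x0^2 + R*x1^2 - v*x2^2 - v*R*x3^2 \<Longrightarrow>
         q^f dvd x0 \<and> q^f dvd x1 \<and> q^f dvd x2 \<and> q^f dvd x3"
proof (induction f arbitrary: x0 x1 x2 x3)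
  case 0
  then show ?case by simp
next
  case (Suc f)
  define S where "S = x0^2 + R*x1^2 - v*x2^2 - v*R*x3^2"
  have e2: "2*Suc f = 2 + 2*f" by simp
  have pw: "q^(2*Suc f) = q^2 * q^(2*f)" by (simp only: e2 power_add)
  have Sd: "q^(2*Suc f) dvd S" using Suc.prems unfolding S_def .
  have qS2: "q^2 dvd S" using Sd unfolding pw by (rule dvd_mult_left)
  have "q dvd q^2" by (simp add: power2_eq_square)
  hence qS: "q dvd S" using qS2 by (rule dvd_trans)
  obtain R' where R': "R = q*R'" using R1 by blast
  have R'n: "\<not> q dvd R'" using R2 R' by (simp add: power2_eq_square)
  have "S - (x0^2 - v*x2^2) = q * (R'*(x1^2 - v*x3^2))" unfolding S_def R' by (simp add: algebra_simps)
  hence "q dvd S - (x0^2 - v*x2^2)" by simp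
  hence "q dvd S - (S - (x0^2 - v*x2^2))" using qS by (rule dvd_diff[rotated])
  hence "q dvd x0^2 - v*x2^2" by simp
  then have h02: "q dvd x2 \<and> q dvd x0" using D0[OF q v] by blast
  then obtain y0 y2 where y02: "x0 = q*y0" "x2 = q*y2" by (auto elim!: dvdE)
  have S2: "S = q^2*(y0^2 - v*y2^2) + q*(R'*(x1^2 - v*x3^2))"
    unfolding S_def R' y02 by (simp add: power2_eq_square algebra_simps)
  have "q^2 dvd S - q^2*(y0^2 - v*y2^2)" by (rule dvd_diff[OF qS2 dvd_triv_left])
  hence "q^2 dvd q*(R'*(x1^2 - v*x3^2))" unfolding S2 by simp
  hence "q dvd R'*(x1^2 - v*x3^2)" using q by (simp add: power2_eq_square prime_gt_0_int)
  hence "q dvd x1^2 - v*x3^2" using R'n q by (simp add: prime_dvd_mult_iff)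
  then have h13: "q dvd x3 \<and> q dvd x1" using D0[OF q v] by blast
  then obtain y1 y3 where y13: "x1 = q*y1" "x3 = q*y3" by (auto elim!: dvdE)
  have S3: "S = q^2 * (y0^2 + R*y1^2 - v*y2^2 - v*R*y3^2)"
    unfolding S_def y02 y13 by (simp add: power2_eq_square algebra_simps)
  have "q^2 * q^(2*f) dvd q^2 * (y0^2 + R*y1^2 - v*y2^2 - v*R*y3^2)"
    using Sd unfolding pw S3 .
  hence "q^(2*f) dvd y0^2 + R*y1^2 - v*y2^2 - v*R*y3^2"
    using q by (simp add: prime_gt_0_int)
  hence IH: "q^f dvd y0 \<and> q^f dvd y1 \<and> q^f dvd y2 \<and> q^f dvd y3" by (rule Suc.IH)
  show ?case unfolding y02 y13 using IH by (simp add: mult_dvd_mono)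
qed

lemma nonres_nat_exists:
  assumes "prime (q::nat)" "q > 2" shows "\<exists>u::nat. \<not> QuadRes (int q) (int u)"
proof -
  obtain v where v: "\<not> QuadRes (int q) v" using nonres_exists[OF assms] by blast
  have q0: "int q > 0" using assms by simp
  have e: "int (nat (v mod int q)) = v mod int q" using q0 by simp
  have "[v mod int q = v] (mod int q)" by simp
  hence "\<not> QuadRes (int q) (v mod int q)" using v QuadRes_cong by blast
  hence "\<not> QuadRes (int q) (int (nat (v mod int q)))" using e by simp
  thus ?thesis by blast
qed

lemma const_exist:
  fixes m :: nat assumes m: "odd m"
  shows "\<exists>R v::int. \<forall>q::int. prime q \<and> q dvd int m \<longrightarrow> q dvd R \<and> \<not> q^2 dvd R \<and> \<not> QuadRes q v"
proof -
  define A where "A = {q::nat. prime q \<and> q dvd m}"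
  have m0: "m > 0" using m by (cases m) auto
  have fin: "finite A" unfolding A_def
    by (rule finite_subset[of _ "{..m}"]) (auto simp: m0 dvd_imp_le)
  have cop: "\<forall>i\<in>A. \<forall>j\<in>A. i \<noteq> j \<longrightarrow> coprime (i^2) (j^2)"
    unfolding A_def by (auto simp: primes_coprime)
  have odd: "q > 2" if "q \<in> A" for q
  proof -
    have "prime q" "q dvd m" using that unfolding A_def by auto
    have "odd q"
    proof
      assume "even q"
      hence "even m" using \<open>q dvd m\<close> by (rule dvd_trans)
      with m show False by simp
    qed
    moreover have "q \<ge> 2" using \<open>prime q\<close> by (rule prime_ge_2_nat)
    ultimately show ?thesis by (cases "q = 2") auto
  qed
  have "\<forall>q\<in>A. \<exists>u::nat. \<not> QuadRes (int q) (int u)"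
  proof
    fix q assume "q \<in> A"
    then show "\<exists>u::nat. \<not> QuadRes (int q) (int u)"
      using nonres_nat_exists[OF _ odd] unfolding A_def by simp
  qed
  hence "\<exists>uf. \<forall>q\<in>A. \<not> QuadRes (int q) (int (uf q))" by (rule bchoice)
  then obtain uf where uf: "\<forall>q\<in>A. \<not> QuadRes (int q) (int (uf q))" by blast
  obtain Rn where Rn: "\<forall>q\<in>A. [Rn = q] (mod q^2)"
    using chinese_remainder_nat[OF fin cop, of id] by auto
  obtain Vn where Vn: "\<forall>q\<in>A. [Vn = uf q] (mod q^2)"
    using chinese_remainder_nat[OF fin cop, of uf] by auto
  show ?thesis
  proof (intro exI allI impI)
    fix q :: int assume qh: "prime q \<and> q dvd int m"
    define qn where "qn = nat q"
    have qq: "q = int qn" unfolding qn_def using qh prime_ge_0_int by auto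
    have qA: "qn \<in> A" unfolding A_def using qh qq by auto
    have q1: "q > 1" using qh prime_gt_1_int by blast
    have c1: "[int Rn = int qn] (mod int (qn^2))" using Rn qA cong_int_iff by blast
    hence d1: "q^2 dvd int Rn - q" using qq by (simp add: cong_iff_dvd_diff)
    have "q dvd q^2" by (simp add: power2_eq_square)
    hence "q dvd int Rn - q" using d1 by (rule dvd_trans)
    hence "q dvd (int Rn - q) + q" by (rule dvd_add) simp
    hence r1: "q dvd int Rn" by simp
    have r2: "\<not> q^2 dvd int Rn"
    proof
      assume "q^2 dvd int Rn"
      hence "q^2 dvd int Rn - (int Rn - q)" using d1 by (rule dvd_diff)
      hence "q^2 dvd q" by simp
      hence "q^2 \<le> q" using q1 by (simp add: zdvd_imp_le)
      with q1 show False by (simp add: power2_eq_square)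
    qed
    have c2: "[int Vn = int (uf qn)] (mod int (qn^2))" using Vn qA cong_int_iff by blast
    hence c3: "[int Vn = int (uf qn)] (mod q)" using qq
      by (intro cong_dvd_modulus[OF c2]) (simp add: power2_eq_square)
    have "\<not> QuadRes q (int Vn)"
    proof
      assume "QuadRes q (int Vn)"
      hence "QuadRes q (int (uf qn))" using QuadRes_cong[OF c3] by blast
      thus False using uf qA qq by simp
    qed
    thus "q dvd int Rn \<and> \<not> q^2 dvd int Rn \<and> \<not> QuadRes q (int Vn)" using r1 r2 by simp
  qed
qed

lemma dvd_from_mult:
  fixes M x :: int
  assumes M: "M \<noteq> 0" and H: "\<And>q. prime q \<Longrightarrow> q ^ multiplicity q M dvd x"
  shows "M dvd x"
proof (cases "x = 0")
  case True then show ?thesis by simp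
next
  case False
  show ?thesis
  proof (rule multiplicity_le_imp_dvd[OF M])
    fix q :: int assume q: "prime q"
    have nu: "\<not> is_unit q" using q not_prime_unit by blast
    show "multiplicity q M \<le> multiplicity q x"
      by (rule multiplicity_geI[OF False nu H[OF q]])
  qed
qed

lemma key_L:
  fixes m :: nat and R v :: int
  assumes m: "m > 0"
    and P: "\<forall>q::int. prime q \<and> q dvd int m \<longrightarrow> q dvd R \<and> \<not> q^2 dvd R \<and> \<not> QuadRes q v"
    and S: "int m ^ 2 dvd x0^2 + R*x1^2 - v*x2^2 - v*R*x3^2"
  shows "int m dvd x0 \<and> int m dvd x1 \<and> int m dvd x2 \<and> int m dvd x3"
proof -
  have gen: "q ^ multiplicity q (int m) dvd x0 \<and> q ^ multiplicity q (int m) dvd x1 \<and>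
      q ^ multiplicity q (int m) dvd x2 \<and> q ^ multiplicity q (int m) dvd x3"
    if q: "prime q" for q :: int
  proof (cases "q dvd int m")
    case False
    then show ?thesis by (simp add: not_dvd_imp_multiplicity_0)
  next
    case True
    define f where "f = multiplicity q (int m)"
    have P': "q dvd R" "\<not> q^2 dvd R" "\<not> QuadRes q v" using P q True by auto
    have "q^f dvd int m" unfolding f_def by (rule multiplicity_dvd)
    hence "(q^f)^2 dvd int m ^ 2" by (rule dvd_power_same)
    moreover have "(q^f)^2 = q^(2*f)" by (metis power_mult mult.commute)
    ultimately have "q^(2*f) dvd int m ^ 2" by simp
    hence "q^(2*f) dvd x0^2 + R*x1^2 - v*x2^2 - v*R*x3^2" using S by (rule dvd_trans)
    hence D: "q^f dvd x0 \<and> q^f dvd x1 \<and> q^f dvd x2 \<and> q^f dvd x3"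
      by (rule descent[OF q P'(3) P'(1) P'(2)])
    thus ?thesis unfolding f_def .
  qed
  have M: "int m \<noteq> 0" using m by simp
  have "int m dvd x0" by (rule dvd_from_mult[OF M]) (use gen in simp)
  moreover have "int m dvd x1" by (rule dvd_from_mult[OF M]) (use gen in simp)
  moreover have "int m dvd x2" by (rule dvd_from_mult[OF M]) (use gen in simp)
  moreover have "int m dvd x3" by (rule dvd_from_mult[OF M]) (use gen in simp)
  ultimately show ?thesis by simp
qed




lemma pigeon5:
  fixes b :: "nat \<Rightarrow> bool"
  shows "\<exists>i j k. i < j \<and> j < k \<and> k < 5 \<and> b j = b i \<and> b k = b i"
proof -
  have "(b 1 = b 0 \<and> b 2 = b 0) \<or> (b 1 = b 0 \<and> b 3 = b 0) \<or> (b 1 = b 0 \<and> b 4 = b 0) \<or>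
        (b 3 = b 2 \<and> b 4 = b 2) \<or> (b 2 = b 0 \<and> b 3 = b 0) \<or> (b 2 = b 0 \<and> b 4 = b 0) \<or>
        (b 3 = b 1 \<and> b 4 = b 1) \<or> (b 2 = b 1 \<and> b 3 = b 1) \<or> (b 3 = b 0 \<and> b 4 = b 0) \<or>
        (b 2 = b 1 \<and> b 4 = b 1)"
    by (cases "b 0"; cases "b 1"; cases "b 2"; cases "b 3"; cases "b 4") simp_all
  thus ?thesis
  proof (elim disjE)
    assume "b 1 = b 0 \<and> b 2 = b 0" thus ?thesis by (intro exI[of _ 0] exI[of _ 1] exI[of _ 2]) simp
  next
    assume "b 1 = b 0 \<and> b 3 = b 0" thus ?thesis by (intro exI[of _ 0] exI[of _ 1] exI[of _ 3]) simp
  next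
    assume "b 1 = b 0 \<and> b 4 = b 0" thus ?thesis by (intro exI[of _ 0] exI[of _ 1] exI[of _ 4]) simp
  next
    assume "b 3 = b 2 \<and> b 4 = b 2" thus ?thesis by (intro exI[of _ 2] exI[of _ 3] exI[of _ 4]) simp
  next
    assume "b 2 = b 0 \<and> b 3 = b 0" thus ?thesis by (intro exI[of _ 0] exI[of _ 2] exI[of _ 3]) simp
  next
    assume "b 2 = b 0 \<and> b 4 = b 0" thus ?thesis by (intro exI[of _ 0] exI[of _ 2] exI[of _ 4]) simp
  next
    assume "b 3 = b 1 \<and> b 4 = b 1" thus ?thesis by (intro exI[of _ 1] exI[of _ 3] exI[of _ 4]) simp
  next
    assume "b 2 = b 1 \<and> b 3 = b 1" thus ?thesis by (intro exI[of _ 1] exI[of _ 2] exI[of _ 3]) simp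
  next
    assume "b 3 = b 0 \<and> b 4 = b 0" thus ?thesis by (intro exI[of _ 0] exI[of _ 3] exI[of _ 4]) simp
  next
    assume "b 2 = b 1 \<and> b 4 = b 1" thus ?thesis by (intro exI[of _ 1] exI[of _ 2] exI[of _ 4]) simp
  qed
qed

lemma sum5_split:
  fixes f :: "nat \<Rightarrow> int"
  assumes "i < j" "j < k" "k < 5"
  shows "(\<Sum>l<5. f l) = f i + f j + f k + (\<Sum>l\<in>{..<5} - {i,j,k}. f l)"
proof -
  have sub: "{i,j,k} \<subseteq> {..<(5::nat)}" using assms by auto
  have "(\<Sum>l<5. f l) = (\<Sum>l\<in>{..<5} - {i,j,k}. f l) + (\<Sum>l\<in>{i,j,k}. f l)"
    by (rule sum.subset_diff[OF sub]) simp
  moreover have "(\<Sum>l\<in>{i,j,k}. f l) = f i + f j + f k" using assms by simp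
  ultimately show ?thesis by simp
qed

lemma unit_not_p4: "prime (P::int) \<Longrightarrow> \<not> P dvd x \<Longrightarrow> \<not> P^4 dvd x^2"
proof
  assume P: "prime P" "\<not> P dvd x" "P^4 dvd x^2"
  have "P dvd P^4" by (simp add: dvd_power)
  hence "P dvd x^2" using P(3) by (rule dvd_trans)
  hence "P dvd x" using P(1) prime_dvd_power by blast
  with P(2) show False by simp
qed

lemma p_not_p4: "(P::int) > 1 \<Longrightarrow> \<not> P^4 dvd P^2"
proof
  assume P: "P > 1" "P^4 dvd P^2"
  hence "P^4 \<le> P^2" by (intro zdvd_imp_le) auto
  moreover have "P^2 < P^4"
  proof -
    have g1: "1 < P^2" using P(1) by (simp add: one_less_power)
    have "P^2 * 1 < P^2 * P^2" by (rule mult_strict_left_mono[OF g1]) (use g1 P(1) in simp)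
    thus ?thesis by (simp add: power2_eq_square power4_eq_xxxx mult.assoc)
  qed
  ultimately show False by simp
qed

lemma UB_core:
  fixes y :: "nat \<Rightarrow> int"
  assumes p: "prime (p::nat)" "p \<ge> 7"
    and nf: "\<forall>l<5. \<not> int p^2 dvd y l"
  shows "\<exists>x. (\<forall>l<5. \<not> int p^4 dvd (x l)^2) \<and> int p^4 dvd (\<Sum>l<5. (x l)^2 * y l)"
proof -
  have pp: "prime (int p)" using p by simp
  have p1: "int p > 1" using p by simp
  obtain i j k where ijk: "i < j" "j < k" "k < 5"
      "(int p dvd y j) = (int p dvd y i)" "(int p dvd y k) = (int p dvd y i)"
    using pigeon5[of "\<lambda>l. int p dvd y l"] by blast
  define G where "G = (\<Sum>l\<in>{..<5} - {i,j,k}. y l)"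
  have main: "\<exists>xi xj xk. \<not> int p dvd xi \<and> \<not> int p dvd xj \<and> \<not> int p dvd xk \<and>
      int p^4 dvd xi^2 * y i + xj^2 * y j + xk^2 * y k + int p^2 * G"
  proof (cases "int p dvd y i")
    case False
    hence u: "\<not> int p dvd y i" "\<not> int p dvd y j" "\<not> int p dvd y k" using ijk by auto
    have T: "int p dvd -(int p^2 * G)" by (simp add: power2_eq_square)
    obtain xi xj xk where x: "\<not> int p dvd xi" "\<not> int p dvd xj" "\<not> int p dvd xk"
      "[y i * xi^2 + y j * xj^2 + y k * xk^2 = -(int p^2 * G)] (mod int p ^ 4)"
      using U3[OF p u T] by blast
    have "int p^4 dvd (y i * xi^2 + y j * xj^2 + y k * xk^2) - (-(int p^2 * G))"
      using x(4) by (simp only: cong_iff_dvd_diff)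
    moreover have "(y i * xi^2 + y j * xj^2 + y k * xk^2) - (-(int p^2 * G))
       = xi^2 * y i + xj^2 * y j + xk^2 * y k + int p^2 * G" by (simp add: algebra_simps)
    ultimately have H: "int p^4 dvd xi^2 * y i + xj^2 * y j + xk^2 * y k + int p^2 * G" by (metis dvd_eqI)
    show ?thesis using x(1-3) H by blast
  next
    case True
    hence d: "int p dvd y i" "int p dvd y j" "int p dvd y k" using ijk by auto
    have nd: "\<not> int p^2 dvd y i" "\<not> int p^2 dvd y j" "\<not> int p^2 dvd y k" using nf ijk by auto
    obtain wi where wi: "y i = int p * wi" using d(1) by (auto elim: dvdE)
    obtain wj where wj: "y j = int p * wj" using d(2) by (auto elim: dvdE)
    obtain wk where wk: "y k = int p * wk" using d(3) by (auto elim: dvdE)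
    have u: "\<not> int p dvd wi" "\<not> int p dvd wj" "\<not> int p dvd wk"
      using nd wi wj wk by (auto simp: power2_eq_square)
    have T: "int p dvd -(int p * G)" by simp
    obtain xi xj xk where x: "\<not> int p dvd xi" "\<not> int p dvd xj" "\<not> int p dvd xk"
      "[wi * xi^2 + wj * xj^2 + wk * xk^2 = -(int p * G)] (mod int p ^ 4)"
      using U3[OF p u T] by blast
    have "int p^4 dvd (wi * xi^2 + wj * xj^2 + wk * xk^2) - (-(int p * G))"
      using x(4) by (simp only: cong_iff_dvd_diff)
    hence "int p^4 dvd int p * ((wi * xi^2 + wj * xj^2 + wk * xk^2) - (-(int p * G)))"
      by (rule dvd_mult)
    moreover have "int p * ((wi * xi^2 + wj * xj^2 + wk * xk^2) - (-(int p * G)))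
       = xi^2 * y i + xj^2 * y j + xk^2 * y k + int p^2 * G"
      unfolding wi wj wk by (simp add: algebra_simps power2_eq_square)
    ultimately have H: "int p^4 dvd xi^2 * y i + xj^2 * y j + xk^2 * y k + int p^2 * G" by (metis dvd_eqI)
    show ?thesis using x(1-3) H by blast
  qed
  then obtain xi xj xk where x: "\<not> int p dvd xi" "\<not> int p dvd xj" "\<not> int p dvd xk"
      "int p^4 dvd xi^2 * y i + xj^2 * y j + xk^2 * y k + int p^2 * G" by blast
  define x where "x = (\<lambda>l. if l = i then xi else if l = j then xj else if l = k then xk else int p)"
  have xv: "x i = xi" "x j = xj" "x k = xk" using ijk unfolding x_def by auto
  have rest: "(\<Sum>l\<in>{..<5} - {i,j,k}. (x l)^2 * y l) = int p^2 * G"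
  proof -
    have "(\<Sum>l\<in>{..<5} - {i,j,k}. (x l)^2 * y l) = (\<Sum>l\<in>{..<5} - {i,j,k}. int p^2 * y l)"
      by (rule sum.cong) (auto simp: x_def)
    also have "\<dots> = int p^2 * G" unfolding G_def by (simp add: sum_distrib_left)
    finally show ?thesis .
  qed
  have "(\<Sum>l<5. (x l)^2 * y l) = xi^2 * y i + xj^2 * y j + xk^2 * y k + int p^2 * G"
    using sum5_split[OF ijk(1-3), of "\<lambda>l. (x l)^2 * y l"] rest xv by simp
  hence S: "int p^4 dvd (\<Sum>l<5. (x l)^2 * y l)" using x(4) by simp
  have "\<forall>l<5. \<not> int p^4 dvd (x l)^2"
  proof (intro allI impI)
    fix l :: nat assume "l < 5"
    show "\<not> int p^4 dvd (x l)^2"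
    proof (cases "l = i \<or> l = j \<or> l = k")
      case True
      then have "x l = xi \<or> x l = xj \<or> x l = xk" using xv by auto
      then show ?thesis using x(1-3) unit_not_p4[OF pp] by auto
    next
      case False
      then have "x l = int p" unfolding x_def by auto
      then show ?thesis using p_not_p4[OF p1] by simp
    qed
  qed
  with S show ?thesis by blast
qed




lemma SqW:
  assumes n: "int n = int p^4 * int K^2" and K: "K > 0" and n0: "n > 0"
    and x: "\<not> int p^4 dvd x^2"
  shows "(int K * x)^2 mod int n \<in> Sq_star n"
proof -
  define z where "z = (int K * x) mod int n"
  have zZ: "z \<in> Zn n" unfolding z_def Zn_def using n0 by simp
  have e: "z^2 mod int n = (int K * x)^2 mod int n" unfolding z_def by (simp add: power_mod)
  have inS: "(int K * x)^2 mod int n \<in> Sq n" unfolding Sq_def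
    by (rule CollectI, rule exI[of _ z]) (simp add: e zZ)
  have "(int K * x)^2 mod int n \<noteq> 0"
  proof
    assume "(int K * x)^2 mod int n = 0"
    hence "int n dvd (int K * x)^2" by (simp add: dvd_eq_mod_eq_0)
    hence "int p^4 * int K^2 dvd x^2 * int K^2" unfolding n by (simp add: power_mult_distrib mult.commute)
    hence "int p^4 dvd x^2" using K by (simp add: dvd_mult_cancel_right)
    with x show False by simp
  qed
  with inS show ?thesis unfolding Sq_star_def by simp
qed

lemma SumW:
  fixes x y :: "nat \<Rightarrow> int"
  assumes n: "int n = int p^4 * int K^2"
    and S: "int p^4 dvd (\<Sum>l<N. (x l)^2 * y l)"
  shows "(\<Sum>l<N. ((int K * x l)^2 mod int n) * y l) mod int n = 0"
proof -
  have c: "[(\<Sum>l<N. ((int K * x l)^2 mod int n) * y l) = (\<Sum>l<N. (int K * x l)^2 * y l)] (mod int n)"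
    by (rule cong_sum) (simp add: cong_mult)
  have e: "(\<Sum>l<N. (int K * x l)^2 * y l) = int K^2 * (\<Sum>l<N. (x l)^2 * y l)"
    by (simp add: sum_distrib_left power_mult_distrib algebra_simps)
  have d: "int n dvd int K^2 * (\<Sum>l<N. (x l)^2 * y l)"
    unfolding n using S by (simp add: mult.commute mult_dvd_mono)
  have "int n dvd (\<Sum>l<N. ((int K * x l)^2 mod int n) * y l)"
    using cong_dvd_iff[OF c] d e by simp
  thus ?thesis by (simp add: dvd_eq_mod_eq_0)
qed

lemma P5:
  assumes p: "prime p" "p \<ge> 7" and n: "int n = int p^4 * int K^2" and K: "K > 0" and n0: "n > 0"
    and len: "length ys = 5"
  shows "has_consec_wzs n (Sq_star n) ys"
proof (cases "\<exists>l<5. int p^2 dvd ys!l")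
  case True
  then obtain l where l: "l < 5" "int p^2 dvd ys!l" by blast
  have p1: "int p > 1" using p by simp
  have tk: "take (Suc l - l) (drop l ys) = [ys!l]"
    using l len by (simp add: Cons_nth_drop_Suc[symmetric])
  define a where "a = (int K * int p)^2 mod int n"
  have aS: "a \<in> Sq_star n" unfolding a_def by (rule SqW[OF n K n0 p_not_p4[OF p1]])
  have "int p^2 * int p^2 dvd int p^2 * ys!l" using l(2) by (rule mult_dvd_mono[OF dvd_refl])
  hence d: "int p^4 dvd (int p)^2 * ys!l" by (simp add: power4_eq_xxxx power2_eq_square mult.assoc)
  have "(\<Sum>l'<(1::nat). ((int K * int p)^2 mod int n) * ys!l) mod int n = 0"
    using SumW[OF n, where N=1 and x="\<lambda>_. int p" and y="\<lambda>_. ys!l"] d by simp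
  hence sm: "(a * ys!l) mod int n = 0" unfolding a_def by simp
  have "weighted_zero_sum n (Sq_star n) [ys!l]"
    unfolding weighted_zero_sum_def
    by (rule conjI, simp, rule exI[of _ "[a]"]) (simp add: aS sm)
  then show ?thesis unfolding has_consec_wzs_def using l len tk
    by (intro exI[of _ l] exI[of _ "Suc l"]) simp
next
  case False
  then have nf: "\<forall>l<5. \<not> int p^2 dvd ys!l" by blast
  obtain x where x: "\<forall>l<5. \<not> int p^4 dvd (x l)^2" "int p^4 dvd (\<Sum>l<5. (x l)^2 * ys!l)"
    using UB_core[OF p nf] by blast
  define as where "as = map (\<lambda>l. (int K * x l)^2 mod int n) [0..<5]"
  have las: "length as = 5" unfolding as_def by simp
  have asS: "set as \<subseteq> Sq_star n" unfolding as_def using SqW[OF n K n0] x(1) by auto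
  have "(\<Sum>l<5. ((int K * x l)^2 mod int n) * ys!l) mod int n = 0"
    by (rule SumW[OF n x(2)])
  moreover have "(\<Sum>i<5. as!i * ys!i) = (\<Sum>l<5. ((int K * x l)^2 mod int n) * ys!l)"
    by (rule sum.cong) (auto simp: as_def)
  ultimately have sm: "(\<Sum>i<length ys. as!i * ys!i) mod int n = 0" using len by simp
  have ne: "ys \<noteq> []" using len by auto
  have "weighted_zero_sum n (Sq_star n) ys"
    unfolding weighted_zero_sum_def using ne las asS sm len by auto
  then show ?thesis unfolding has_consec_wzs_def using len
    by (intro exI[of _ 0] exI[of _ 5]) simp
qed

lemma LB:
  fixes m :: nat and R v :: int
  assumes m: "m > 0" and n: "n = m^2"
    and P: "\<forall>q::int. prime q \<and> q dvd int m \<longrightarrow> q dvd R \<and> \<not> q^2 dvd R \<and> \<not> QuadRes q v"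
    and t: "t \<le> 4"
  shows "\<not> has_consec_wzs n (Sq_star n) (take t (map (\<lambda>z. z mod int n) [1, R, -v, -(v*R)]))"
proof
  define cl where "cl = [1, R, -v, -(v*R)]"
  define ys where "ys = take t (map (\<lambda>z. z mod int n) cl)"
  assume "has_consec_wzs n (Sq_star n) (take t (map (\<lambda>z. z mod int n) [1, R, -v, -(v*R)]))"
  hence "has_consec_wzs n (Sq_star n) ys" unfolding ys_def cl_def .
  then obtain i j where ij: "i < j" "j \<le> length ys"
      and wz: "weighted_zero_sum n (Sq_star n) (take (j - i) (drop i ys))"
    unfolding has_consec_wzs_def by blast
  have lys: "length ys = t" unfolding ys_def cl_def using t by simp
  have j4: "j \<le> 4" using ij lys t by simp
  define zs where "zs = take (j - i) (drop i ys)"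
  have lzs: "length zs = j - i" unfolding zs_def using ij by simp
  have zsn: "zs ! l = cl ! (i + l) mod int n" if "l < j - i" for l
  proof -
    have lcl: "length cl = 4" unfolding cl_def by simp
    have a: "i + l < 4" using that ij j4 by simp
    have b: "i + l < t" using that ij lys by simp
    have "zs ! l = ys ! (i + l)" using that ij unfolding zs_def by (simp add: nth_take nth_drop)
    also have "\<dots> = map (\<lambda>z. z mod int n) cl ! (i + l)" unfolding ys_def using b by simp
    also have "\<dots> = cl ! (i + l) mod int n" using a lcl by simp
    finally show ?thesis .
  qed
  obtain as where as: "length as = length zs" "set as \<subseteq> Sq_star n"
      "(\<Sum>l<length zs. as!l * zs!l) mod int n = 0"
    using wz unfolding weighted_zero_sum_def zs_def[symmetric] by auto
  have "\<forall>l. \<exists>x. l < j - i \<longrightarrow> as!l = x^2 mod int n"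
  proof
    fix l
    show "\<exists>x. l < j - i \<longrightarrow> as!l = x^2 mod int n"
    proof (cases "l < j - i")
      case True
      hence "as!l \<in> set as" using as(1) lzs by simp
      hence "as!l \<in> Sq n" using as(2) unfolding Sq_star_def by auto
      then show ?thesis unfolding Sq_def by auto
    qed simp
  qed
  then obtain xf where xf: "\<And>l. l < j - i \<Longrightarrow> as!l = (xf l)^2 mod int n"
    by (metis choice)
  define X where "X = (\<lambda>k. if i \<le> k \<and> k < j then xf (k - i) else 0)"
  define g where "g = (\<lambda>k. (X k)^2 * cl!k)"
  have c1: "[(\<Sum>l<j - i. as!l * zs!l) = (\<Sum>l<j - i. (xf l)^2 * cl!(i+l))] (mod int n)"
  proof (rule cong_sum)
    fix l assume "l \<in> {..<j - i}"
    hence l: "l < j - i" by simp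
    have "[as!l = (xf l)^2] (mod int n)" using xf[OF l] by simp
    moreover have "[zs!l = cl!(i+l)] (mod int n)" using zsn[OF l] by simp
    ultimately show "[as!l * zs!l = (xf l)^2 * cl!(i+l)] (mod int n)" by (rule cong_mult)
  qed
  have e2: "(\<Sum>l<j - i. (xf l)^2 * cl!(i+l)) = (\<Sum>l<j - i. g (l + i))"
    by (rule sum.cong) (auto simp: g_def X_def add.commute)
  have e3: "(\<Sum>l<j - i. g (l + i)) = (\<Sum>k\<in>{i..<j}. g k)"
    using sum.shift_bounds_nat_ivl[of g 0 i "j - i"] ij by (simp add: atLeast0LessThan)
  have e4: "(\<Sum>k\<in>{i..<j}. g k) = (\<Sum>k<4. g k)"
    by (rule sum.mono_neutral_left) (use j4 in \<open>auto simp: g_def X_def\<close>)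
  have e5: "(\<Sum>k<4. g k) = (X 0)^2 + R * (X 1)^2 - v * (X 2)^2 - v * R * (X 3)^2"
    by (simp add: g_def cl_def eval_nat_numeral algebra_simps)
  have "int n dvd (\<Sum>l<j - i. as!l * zs!l)" using as(3) lzs by (simp add: dvd_eq_mod_eq_0)
  hence "int n dvd (X 0)^2 + R * (X 1)^2 - v * (X 2)^2 - v * R * (X 3)^2"
    using cong_dvd_iff[OF c1] e2 e3 e4 e5 by simp
  hence "int m ^ 2 dvd (X 0)^2 + R * (X 1)^2 - v * (X 2)^2 - v * R * (X 3)^2" using n by simp
  hence K: "int m dvd X 0 \<and> int m dvd X 1 \<and> int m dvd X 2 \<and> int m dvd X 3"
    by (rule key_L[OF m P])
  have i4: "i < 4" using ij j4 by simp
  hence "i = 0 \<or> i = 1 \<or> i = 2 \<or> i = 3" by auto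
  hence "int m dvd X i" using K by auto
  moreover have "X i = xf 0" unfolding X_def using ij by simp
  ultimately have "int m dvd xf 0" by simp
  hence "int m ^ 2 dvd (xf 0)^2" by (rule dvd_power_same)
  hence "(xf 0)^2 mod int n = 0" using n by (simp add: dvd_eq_mod_eq_0)
  hence a0: "as!0 = 0" using xf[of 0] ij by simp
  have "as!0 \<in> set as" using as(1) lzs ij by simp
  hence "as!0 \<noteq> 0" using as(2) unfolding Sq_star_def by auto
  with a0 show False by simp
qed

theorem mainTheorem18:
  fixes n p :: nat
  assumes "odd n"
    and "\<exists>m. n = m^2"
    and "prime p" and "p \<ge> 7" and "p^4 dvd n"
  shows "C_A (Sq_star n) n = 5"
proof -
  obtain m where nm: "n = m^2" using assms(2) by blast
  have om: "odd m" using assms(1) nm by simp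
  have m0: "m > 0" using om by (cases m) auto
  have n0: "n > 0" using m0 nm by simp
  have p: "prime p" "p \<ge> 7" using assms(3,4) .
  have nu: "\<not> is_unit p" using p(1) not_prime_unit by blast
  have "multiplicity p (m^2) = 2 * multiplicity p m"
    using p(1) m0 by (simp add: prime_elem_multiplicity_power_distrib)
  moreover have "multiplicity p (m^2) \<ge> 4"
    using assms(5) nm m0 nu by (intro multiplicity_geI) auto
  ultimately have "multiplicity p m \<ge> 2" by simp
  hence "p^2 dvd m" by (rule multiplicity_dvd')
  then obtain K where mK: "m = p^2 * K" by (auto elim: dvdE)
  have K0: "K > 0" using m0 mK by (cases K) auto
  have nK: "n = p^4 * K^2" using nm mK by (simp add: power_mult_distrib power_mult[symmetric])
  have nKi: "int n = int p^4 * int K^2" using nK by simp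
  obtain R v where RV: "\<forall>q::int. prime q \<and> q dvd int m \<longrightarrow> q dvd R \<and> \<not> q^2 dvd R \<and> \<not> QuadRes q v"
    using const_exist[OF om] by blast
  define Q where "Q = (\<lambda>t. \<forall>ys. length ys = t \<and> set ys \<subseteq> Zn n \<longrightarrow> has_consec_wzs n (Sq_star n) ys)"
  have Q5: "Q 5" unfolding Q_def using P5[OF p nKi K0 n0] by blast
  have Qlow: "5 \<le> t" if "0 < t \<and> Q t" for t
  proof (rule ccontr)
    assume "\<not> 5 \<le> t"
    hence t4: "t \<le> 4" by simp
    define ys where "ys = take t (map (\<lambda>z. z mod int n) [1, R, -v, -(v*R)])"
    have "length ys = t" unfolding ys_def using t4 by simp
    moreover have "set ys \<subseteq> Zn n"
    proof
      fix z assume "z \<in> set ys"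
      hence "z \<in> set (map (\<lambda>z. z mod int n) [1, R, -v, -(v*R)])" unfolding ys_def
        by (meson in_set_takeD)
      then obtain w where "z = w mod int n" by auto
      thus "z \<in> Zn n" unfolding Zn_def using n0 by simp
    qed
    ultimately have "has_consec_wzs n (Sq_star n) ys" using that unfolding Q_def by blast
    moreover have "\<not> has_consec_wzs n (Sq_star n) ys" unfolding ys_def
      by (rule LB[OF m0 nm RV t4])
    ultimately show False by simp
  qed
  have "(LEAST t. 0 < t \<and> Q t) = 5"
    by (rule Least_equality) (use Q5 Qlow in auto)
  thus ?thesis unfolding C_A_def Q_def .
qed


end
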